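(* Let $\mathbb P$ be a Bernoulli measure on $\partial\mathcal M$, let $a\in\Sigma$, and let $\mathcal M'_a=\{x\in\mathcal M:|x|_a=0\}$ be the submonoid of heaps with no occurrence of $a$. Then $$\sum_{x\in\mathcal M'_a}\mathbb P({\uparrow}x)<\infty,\qquad \sum_{x\in\mathcal M'_a}|x|\,\mathbb P({\uparrow}x)<\infty,\qquad \sum_{x\in\mathcal M'_a}|x|^2\,\mathbb P({\uparrow}x)<\infty.$$
   Context: Let $\Sigma$ be a finite set with at least two elements and $I\subseteq\Sigma\times\Sigma$ a symmetric irreflexive relation such that $(\Sigma,(\Sigma\times\Sigma)\setminus I)$ is connected. The heap monoid $\mathcal M=\mathcal M(\Sigma,I)$ is $\Sigma^*$ modulo the smallest congruence containing $(ab,ba)$ for $(a,b)\in I$; $\cdot$ is concatenation, $0$ the empty heap, $|x|$ the length and $|x|_a$ the number of occurrences of $a$ in any representative word. $x\le y$ iff $y=x\cdot z$ for some $z$. Cliques are heaps formed by distinct pairwise independent pieces; $\mathfrak C$ the nonempty ones; $\gamma\to\gamma'$ iff each piece of $\gamma'$ is dependent on some piece of $\gamma$. Every nonempty heap has a unique Cartier–Foata decomposition $\gamma_1\cdots\gamma_n$ with $\gamma_i\in\mathfrak C$, $\gamma_i\to\gamma_{i+1}$. The boundary $\partial\mathcal M$ is the set of infinite sequences $(\gamma_n)_{n\ge1}$ of nonempty cliques with $\gamma_n\to\gamma_{n+1}$, ordered together with $\mathcal M$ by $\xi\le\xi'$ iff $\gamma_1\cdots\gamma_n\le\gamma'_1\cdots\gamma'_n$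 for all $n$ (finite heaps padded with empty cliques). ${\uparrow}x=\{\xi\in\partial\mathcal M:x\le\xi\}$; $\mathcal F$ the generated $\sigma$-algebra. A Bernoulli measure is a probability $\mathbb P$ on $(\partial\mathcal M,\mathcal F)$ with $\mathbb P({\uparrow}(x\cdot y))=\mathbb P({\uparrow}x)\mathbb P({\uparrow}y)$ and $\mathbb P({\uparrow}x)>0$ for all $x,y$. *)

theory Defs
  imports "HOL-Probability.Probability"
begin

text \<open>Heap monoid M(Sigma,I): the alphabet Sigma is the finite type 'a; I is the
independence relation. Heaps are equivalence classes of words modulo the
smallest congruence containing (ab,ba) for I a b.\<close>

definition swap_step :: "('a \<Rightarrow> 'a \<Rightarrow> bool) \<Rightarrow> 'a list \<Rightarrow> 'a list \<Rightarrow> bool" where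
  "swap_step I u v \<longleftrightarrow> (\<exists>p q a b. I a b \<and> u = p @ [a, b] @ q \<and> v = p @ [b, a] @ q)"

definition heap_equiv :: "('a \<Rightarrow> 'a \<Rightarrow> bool) \<Rightarrow> 'a list \<Rightarrow> 'a list \<Rightarrow> bool" where
  "heap_equiv I = equivclp (swap_step I)"

definition heap_of :: "('a \<Rightarrow> 'a \<Rightarrow> bool) \<Rightarrow> 'a list \<Rightarrow> 'a list set" where
  "heap_of I w = {v. heap_equiv I w v}"

definition heaps :: "('a \<Rightarrow> 'a \<Rightarrow> bool) \<Rightarrow> 'a list set set" where
  "heaps I = range (heap_of I)"

definition rep :: "'a list set \<Rightarrow> 'a list" where
  "rep x = (SOME w. w \<in> x)"

definition hmult :: "('a \<Rightarrow> 'a \<Rightarrow> bool) \<Rightarrow> 'a list set \<Rightarrow> 'a list set \<Rightarrow> 'a list set" where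
  "hmult I x y = heap_of I (rep x @ rep y)"

definition heap_le :: "('a \<Rightarrow> 'a \<Rightarrow> bool) \<Rightarrow> 'a list set \<Rightarrow> 'a list set \<Rightarrow> bool" where
  "heap_le I x y \<longleftrightarrow> (\<exists>z \<in> heaps I. y = hmult I x z)"

definition hlen :: "'a list set \<Rightarrow> nat" where
  "hlen x = length (rep x)"

definition hcount :: "'a \<Rightarrow> 'a list set \<Rightarrow> nat" where
  "hcount a x = count_list (rep x) a"

definition cliques :: "('a \<Rightarrow> 'a \<Rightarrow> bool) \<Rightarrow> 'a set set" where
  "cliques I = {\<gamma>. \<gamma> \<noteq> {} \<and> (\<forall>a\<in>\<gamma>. \<forall>b\<in>\<gamma>. a \<noteq> b \<longrightarrow> I a b)}"

definition arrow :: "('a \<Rightarrow> 'a \<Rightarrow> bool) \<Rightarrow> 'a set \<Rightarrow> 'a set \<Rightarrow> bool" where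
  "arrow I \<gamma> \<gamma>' \<longleftrightarrow> (\<forall>b\<in>\<gamma>'. \<exists>a\<in>\<gamma>. \<not> I a b)"

definition cword :: "'a set \<Rightarrow> 'a list" where
  "cword \<gamma> = (SOME w. distinct w \<and> set w = \<gamma>)"

definition prod_cliques :: "('a \<Rightarrow> 'a \<Rightarrow> bool) \<Rightarrow> (nat \<Rightarrow> 'a set) \<Rightarrow> nat \<Rightarrow> 'a list set" where
  "prod_cliques I c n = heap_of I (concat (map (\<lambda>i. cword (c i)) [0..<n]))"

definition boundary :: "('a \<Rightarrow> 'a \<Rightarrow> bool) \<Rightarrow> (nat \<Rightarrow> 'a set) set" where
  "boundary I = {\<xi>. \<forall>n. \<xi> n \<in> cliques I \<and> arrow I (\<xi> n) (\<xi> (Suc n))}"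

text \<open>Cartier-Foata decomposition of a finite heap, padded with empty cliques.\<close>
definition cf :: "('a \<Rightarrow> 'a \<Rightarrow> bool) \<Rightarrow> 'a list set \<Rightarrow> nat \<Rightarrow> 'a set" where
  "cf I x = (SOME c. \<exists>k. (\<forall>i<k. c i \<in> cliques I) \<and> (\<forall>i. Suc i < k \<longrightarrow> arrow I (c i) (c (Suc i)))
                \<and> (\<forall>i\<ge>k. c i = {}) \<and> prod_cliques I c k = x)"

definition up :: "('a \<Rightarrow> 'a \<Rightarrow> bool) \<Rightarrow> 'a list set \<Rightarrow> (nat \<Rightarrow> 'a set) set" where
  "up I x = {\<xi> \<in> boundary I. \<forall>n. heap_le I (prod_cliques I (cf I x) n) (prod_cliques I \<xi> n)}"

definition bernoulli :: "('a \<Rightarrow> 'a \<Rightarrow> bool) \<Rightarrow> (nat \<Rightarrow> 'a set) measure \<Rightarrow> bool" where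
  "bernoulli I P \<longleftrightarrow> prob_space P \<and> space P = boundary I
     \<and> sets P = sigma_sets (boundary I) (up I ` heaps I)
     \<and> (\<forall>x\<in>heaps I. \<forall>y\<in>heaps I. measure P (up I (hmult I x y)) = measure P (up I x) * measure P (up I y))
     \<and> (\<forall>x\<in>heaps I. measure P (up I x) > 0)"

end

theory Submission
  imports Defs
begin

lemma equivclp_map:
  assumes "\<And>x y. R x y \<Longrightarrow> R (f x) (f y)" "equivclp R u v"
  shows "equivclp R (f u) (f v)"
  using assms(2)
proof (induction rule: equivclp_induct)
  case base then show ?case by simp
next
  case (step y z)
  then show ?case using assms(1)
    by (meson equivclp_into_equivclp)
qed

lemma equivclp_inv:
  assumes "\<And>x y. R x y \<Longrightarrow> g x = g y" "equivclp R u v"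
  shows "g u = g v"
  using assms(2)
proof (induction rule: equivclp_induct)
  case base then show ?case by simp
next
  case (step y z)
  then show ?case using assms(1) by auto
qed

locale hp =
  fixes I :: "'a \<Rightarrow> 'a \<Rightarrow> bool"
  assumes symI: "symp I" and irrI: "irreflp I"
begin

lemma Isym: "I x y \<Longrightarrow> I y x" using symI by (meson sympD)
lemma Iirr: "\<not> I x x" using irrI by (meson irreflpD)

lemma swap_sym: "swap_step I u v \<Longrightarrow> swap_step I v u"
  unfolding swap_step_def using Isym by blast

lemma heq_refl[simp]: "heap_equiv I u u" by (simp add: heap_equiv_def)
lemma heq_sym: "heap_equiv I u v \<Longrightarrow> heap_equiv I v u"
  by (simp add: heap_equiv_def equivclp_sym)
lemma heq_trans: "heap_equiv I u v \<Longrightarrow> heap_equiv I v w \<Longrightarrow> heap_equiv I u w"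
  unfolding heap_equiv_def by (meson equivclp_trans)

lemma swap_ctx: "swap_step I u v \<Longrightarrow> swap_step I (p @ u @ q) (p @ v @ q)"
  unfolding swap_step_def by (metis append.assoc)

lemma heq_ctx: "heap_equiv I u v \<Longrightarrow> heap_equiv I (p @ u @ q) (p @ v @ q)"
  unfolding heap_equiv_def
  by (rule equivclp_map[where f="\<lambda>u. p @ u @ q"]) (auto intro: swap_ctx)

lemma heq_app: "heap_equiv I u u' \<Longrightarrow> heap_equiv I v v' \<Longrightarrow> heap_equiv I (u @ v) (u' @ v')"
  using heq_ctx[of u u' "[]" v] heq_ctx[of v v' u' "[]"] heq_trans by auto

lemma heq_swap: "I b c \<Longrightarrow> heap_equiv I (p @ b # c # q) (p @ c # b # q)"
  unfolding heap_equiv_def swap_step_def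
  by (rule r_into_equivclp) force

lemma heq_inv:
  assumes "\<And>p q b c. I b c \<Longrightarrow> g (p @ b # c # q) = g (p @ c # b # q)"
    and "heap_equiv I u v"
  shows "g u = g v"
  using assms(2) unfolding heap_equiv_def
proof (rule equivclp_inv[rotated])
  fix x y assume "swap_step I x y"
  then obtain p q b c where "I b c" "x = p @ [b, c] @ q" "y = p @ [c, b] @ q"
    unfolding swap_step_def by blast
  then show "g x = g y" using assms(1) by simp
qed

lemma heq_length: "heap_equiv I u v \<Longrightarrow> length u = length v"
  by (rule heq_inv) auto
lemma heq_count: "heap_equiv I u v \<Longrightarrow> count_list u a = count_list v a"
  by (rule heq_inv[where g="\<lambda>u. count_list u a"]) auto

lemma in_heap_of: "w \<in> heap_of I w" by (simp add: heap_of_def)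

lemma heap_of_eq: "heap_of I u = heap_of I v \<longleftrightarrow> heap_equiv I u v"
proof
  assume "heap_of I u = heap_of I v"
  then have "v \<in> heap_of I u" using in_heap_of by metis
  then show "heap_equiv I u v" by (simp add: heap_of_def)
next
  assume "heap_equiv I u v"
  then show "heap_of I u = heap_of I v" unfolding heap_of_def
    using heq_sym heq_trans by blast
qed

lemma rep_heap_of: "heap_equiv I w (rep (heap_of I w))"
proof -
  have "rep (heap_of I w) \<in> heap_of I w" unfolding rep_def by (rule someI, rule in_heap_of)
  then show ?thesis by (simp add: heap_of_def)
qed

lemma heap_of_rep: "x \<in> heaps I \<Longrightarrow> heap_of I (rep x) = x"
  unfolding heaps_def using rep_heap_of heap_of_eq by (metis heq_sym imageE)

lemma heap_of_in[simp]: "heap_of I w \<in> heaps I" by (simp add: heaps_def)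

lemma hmult_heap_of: "hmult I (heap_of I u) (heap_of I v) = heap_of I (u @ v)"
  unfolding hmult_def heap_of_eq
  by (meson heq_app heq_sym rep_heap_of)

lemma hlen_heap_of: "hlen (heap_of I w) = length w"
  unfolding hlen_def using rep_heap_of heq_length by metis

lemma hcount_heap_of: "hcount a (heap_of I w) = count_list w a"
  unfolding hcount_def using rep_heap_of heq_count by metis

lemma hmult_in: "hmult I x y \<in> heaps I" by (simp add: hmult_def)

end

context hp begin

definition Hof :: "('a \<times> nat) list \<Rightarrow> 'a \<Rightarrow> nat" where
  "Hof A c = Max (insert 0 (snd ` {p \<in> set A. \<not> I (fst p) c}))"

definition ext :: "('a \<times> nat) list \<Rightarrow> 'a list \<Rightarrow> ('a \<times> nat) list" where
  "ext A v = foldl (\<lambda>B b. B @ [(b, Suc (Hof B b))]) A v"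

definition annot :: "'a list \<Rightarrow> ('a \<times> nat) list" where
  "annot w = ext [] w"

definition maxH :: "('a \<times> nat) list \<Rightarrow> nat" where
  "maxH A = Max (insert 0 (snd ` set A))"

definition extN where "extN A v = drop (length A) (ext A v)"

lemma ext_append: "ext A (u @ v) = ext (ext A u) v"
  by (simp add: ext_def)
lemma ext_Cons: "ext A (b # v) = ext (A @ [(b, Suc (Hof A b))]) v"
  by (simp add: ext_def)
lemma ext_Nil[simp]: "ext A [] = A" by (simp add: ext_def)

lemma ext_prefix: "\<exists>B. ext A v = A @ B \<and> map fst B = v"
proof (induction v arbitrary: A)
  case Nil then show ?case by simp
next
  case (Cons b v)
  then obtain B where "ext (A @ [(b, Suc (Hof A b))]) v = (A @ [(b, Suc (Hof A b))]) @ B" "map fst B = v"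
    by blast
  then show ?case by (auto simp: ext_Cons intro!: exI[of _ "(b, Suc (Hof A b)) # B"])
qed

lemma ext_split: "ext A v = A @ extN A v" and extN_fst: "map fst (extN A v) = v"
  using ext_prefix[of A v] by (auto simp: extN_def)

lemma annot_fst: "map fst (annot w) = w"
  using ext_split extN_fst by (metis annot_def append_Nil)

lemma extN_Cons: "extN A (b # v) = (b, Suc (Hof A b)) # extN (A @ [(b, Suc (Hof A b))]) v"
proof -
  have "extN A (b#v) = drop (length A) (ext (A @ [(b, Suc (Hof A b))]) v)" by (simp add: extN_def ext_Cons)
  also have "... = (b, Suc (Hof A b)) # extN (A @ [(b, Suc (Hof A b))]) v" by (subst ext_split) simp
  finally show ?thesis .
qed

lemma Hof_ge: "p \<in> set A \<Longrightarrow> \<not> I (fst p) c \<Longrightarrow> snd p \<le> Hof A c"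
  unfolding Hof_def by (rule Max_ge) auto

lemma Hof_mono: "set A \<subseteq> set B \<Longrightarrow> Hof A c \<le> Hof B c"
  unfolding Hof_def by (rule Max_mono) auto

lemma Hof_le_maxH: "Hof A c \<le> maxH A"
  unfolding Hof_def maxH_def by (rule Max_mono) auto

lemma maxH_ge: "p \<in> set A \<Longrightarrow> snd p \<le> maxH A"
  unfolding maxH_def by (rule Max_ge) auto

lemma Hof_cases: "Hof A c = 0 \<or> (\<exists>p \<in> set A. \<not> I (fst p) c \<and> snd p = Hof A c)"
proof -
  have "Hof A c \<in> insert 0 (snd ` {p \<in> set A. \<not> I (fst p) c})"
    unfolding Hof_def by (rule Max_in) auto
  then show ?thesis by auto
qed

lemma ext_mset: "mset A = mset B \<Longrightarrow> mset (ext A v) = mset (ext B v)"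
proof (induction v arbitrary: A B)
  case Nil then show ?case by simp
next
  case (Cons b v)
  have "set A = set B" using Cons.prems by (metis set_mset_mset)
  then have "Hof A b = Hof B b" by (simp add: Hof_def)
  then have "mset (A @ [(b, Suc (Hof A b))]) = mset (B @ [(b, Suc (Hof B b))])" using Cons.prems by simp
  then show ?case unfolding ext_Cons by (rule Cons.IH)
qed

lemma Hof_snoc_indep: "I b c \<Longrightarrow> Hof (A @ [(b, h)]) c = Hof A c"
  unfolding Hof_def
  by (rule arg_cong[where f="\<lambda>S. Max (insert 0 (snd ` S))"]) (auto simp: Isym)

lemma ext_swap: "I b c \<Longrightarrow> mset (ext A [b, c]) = mset (ext A [c, b])"
  by (simp add: ext_def Hof_snoc_indep Isym)

lemma annot_inv: "heap_equiv I u v \<Longrightarrow> mset (annot u) = mset (annot v)"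
proof (rule heq_inv[where g="\<lambda>u. mset (annot u)"])
  fix p q b c assume "I b c"
  have "mset (ext (ext [] p) [b, c]) = mset (ext (ext [] p) [c, b])" using ext_swap[OF \<open>I b c\<close>] .
  then have "mset (ext (ext (ext [] p) [b, c]) q) = mset (ext (ext (ext [] p) [c, b]) q)"
    by (rule ext_mset)
  then show "mset (annot (p @ b # c # q)) = mset (annot (p @ c # b # q))"
    by (simp add: annot_def ext_append[symmetric])
qed

definition srt :: "('a \<times> nat) list \<Rightarrow> bool" where
  "srt A = sorted_wrt (\<lambda>p q. \<not> I (fst p) (fst q) \<longrightarrow> snd p < snd q) A"

lemma ext_srt: "srt A \<Longrightarrow> srt (ext A v)"
proof (induction v arbitrary: A)
  case Nil then show ?case by simp
next
  case (Cons b v)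
  have "srt (A @ [(b, Suc (Hof A b))])"
    using Cons.prems Hof_ge by (fastforce simp: srt_def sorted_wrt_append)
  then show ?case by (simp add: ext_Cons Cons.IH)
qed

lemma annot_srt: "srt (annot w)"
  unfolding annot_def by (rule ext_srt) (simp add: srt_def)

lemma ext_pos: "(\<forall>p\<in>set A. 0 < snd p) \<Longrightarrow> \<forall>p\<in>set (ext A v). 0 < snd p"
proof (induction v arbitrary: A)
  case Nil then show ?case by simp
next
  case (Cons b v) then show ?case unfolding ext_Cons by (intro Cons.IH) auto
qed

lemma annot_pos: "p \<in> set (annot w) \<Longrightarrow> 0 < snd p"
  using ext_pos[of "[]" w] by (auto simp: annot_def)

lemma ext_ub: "p \<in> set (ext A v) \<Longrightarrow> snd p \<le> maxH A + length v"
proof (induction v arbitrary: A)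
  case Nil then show ?case by (simp add: maxH_ge)
next
  case (Cons b v)
  let ?A = "A @ [(b, Suc (Hof A b))]"
  have *: "\<forall>p\<in>set ?A. snd p \<le> Suc (maxH A)" using Hof_le_maxH[of A b] maxH_ge[of _ A]
    by (auto intro: le_SucI)
  have "maxH ?A \<le> Suc (maxH A)"
    by (subst maxH_def, rule Max.boundedI) (use * in auto)
  then show ?case using Cons by (force simp: ext_Cons)
qed

lemma ext_lb: "(\<forall>c. k \<le> Hof A c) \<Longrightarrow> p \<in> set (extN A v) \<Longrightarrow> k < snd p"
proof (induction v arbitrary: A)
  case Nil then show ?case by (simp add: extN_def)
next
  case (Cons b v)
  let ?A = "A @ [(b, Suc (Hof A b))]"
  have "set A \<subseteq> set ?A" by auto
  then have "\<forall>c. k \<le> Hof ?A c" using Cons.prems(1) Hof_mono le_trans by blast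
  moreover have "extN A (b # v) = (b, Suc (Hof A b)) # extN ?A v" by (rule extN_Cons)
  ultimately show ?case using Cons by (auto simp: le_imp_less_Suc)
qed

lemma chain_lb:
  "successively (\<lambda>x y. \<not> I x y) (b # v) \<Longrightarrow> h \<le> Hof A b \<Longrightarrow> p \<in> set (extN A (b # v)) \<Longrightarrow> h < snd p"
proof (induction v arbitrary: A b h p)
  case Nil then show ?case by (simp add: extN_def ext_def)
next
  case (Cons b' v)
  let ?A = "A @ [(b, Suc (Hof A b))]"
  have ext: "extN A (b # b' # v) = (b, Suc (Hof A b)) # extN ?A (b' # v)" by (rule extN_Cons)
  have "Suc (Hof A b) \<le> Hof ?A b'" using Hof_ge[of "(b, Suc (Hof A b))" ?A b'] Cons.prems(1) by auto
  then have IH: "\<And>q. q \<in> set (extN ?A (b' # v)) \<Longrightarrow> Suc (Hof A b) < snd q"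
    using Cons.IH[of b' "Suc (Hof A b)" ?A] Cons.prems(1) by auto
  show ?case
  proof (cases "p = (b, Suc (Hof A b))")
    case True then show ?thesis using Cons.prems(2) by auto
  next
    case False
    then have "p \<in> set (extN ?A (b' # v))" using Cons.prems(3) ext by auto
    then show ?thesis using IH Cons.prems(2) by fastforce
  qed
qed

lemma ext_pred:
  assumes "\<forall>p\<in>set A. 1 < snd p \<longrightarrow> (\<exists>q\<in>set A. \<not> I (fst q) (fst p) \<and> snd q = snd p - 1)"
  shows "\<forall>p\<in>set (ext A v). 1 < snd p \<longrightarrow> (\<exists>q\<in>set (ext A v). \<not> I (fst q) (fst p) \<and> snd q = snd p - 1)"
  using assms
proof (induction v arbitrary: A)
  case Nil then show ?case by simp
next
  case (Cons b v)
  let ?A = "A @ [(b, Suc (Hof A b))]"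
  have "\<forall>p\<in>set ?A. 1 < snd p \<longrightarrow> (\<exists>q\<in>set ?A. \<not> I (fst q) (fst p) \<and> snd q = snd p - 1)"
  proof
    fix p assume p: "p \<in> set ?A"
    show "1 < snd p \<longrightarrow> (\<exists>q\<in>set ?A. \<not> I (fst q) (fst p) \<and> snd q = snd p - 1)"
    proof (cases "p \<in> set A")
      case True then show ?thesis using Cons.prems by fastforce
    next
      case False
      then have "p = (b, Suc (Hof A b))" using p by auto
      then show ?thesis using Hof_cases[of A b] by auto
    qed
  qed
  then show ?case unfolding ext_Cons by (rule Cons.IH)
qed

lemma annot_pred: "p \<in> set (annot w) \<Longrightarrow> 1 < snd p \<Longrightarrow> \<exists>q\<in>set (annot w). \<not> I (fst q) (fst p) \<and> snd q = snd p - 1"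
  using ext_pred[of "[]" w] by (auto simp: annot_def)

end

lemma sorted_wrt_mset_unique:
  assumes "\<And>x y. R x y \<Longrightarrow> \<not> R y x"
  shows "sorted_wrt R xs \<Longrightarrow> sorted_wrt R ys \<Longrightarrow> mset xs = mset ys \<Longrightarrow> xs = ys"
proof (induction xs arbitrary: ys)
  case Nil then show ?case by simp
next
  case (Cons x xs)
  then obtain y ys' where ys: "ys = y # ys'" by (cases ys) auto
  have "x = y"
  proof (rule ccontr)
    assume "x \<noteq> y"
    have "x \<in> set ys" using Cons.prems(3) by (metis list.set_intros(1) set_mset_mset)
    then have "x \<in> set ys'" using \<open>x \<noteq> y\<close> ys by auto
    then have "R y x" using Cons.prems(2) ys by auto
    have "y \<in> set (x # xs)" using Cons.prems(3) ys by (metis list.set_intros(1) set_mset_mset)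
    then have "y \<in> set xs" using \<open>x \<noteq> y\<close> by auto
    then have "R x y" using Cons.prems(1) by auto
    then show False using \<open>R y x\<close> assms by blast
  qed
  then show ?case using Cons ys by auto
qed

context hp begin

lemma bubble: "(\<forall>e\<in>set v1. I d e) \<Longrightarrow> heap_equiv I (v1 @ d # v2) (d # v1 @ v2)"
proof (induction v1)
  case Nil then show ?case by simp
next
  case (Cons e v1)
  have "heap_equiv I (e # v1 @ d # v2) (e # d # v1 @ v2)"
    using heq_ctx[of "v1 @ d # v2" "d # v1 @ v2" "[e]" "[]"] Cons by auto
  moreover have "heap_equiv I (e # d # v1 @ v2) (d # e # v1 @ v2)"
    using heq_swap[of e d "[]" "v1 @ v2"] Cons.prems Isym by auto
  ultimately show ?case using heq_trans by auto
qed

abbreviation pr :: "'a \<Rightarrow> 'a \<Rightarrow> 'a list \<Rightarrow> 'a list" where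
  "pr b c u \<equiv> filter (\<lambda>d. d = b \<or> d = c) u"

lemma proj_equiv:
  "(\<forall>b c. \<not> I b c \<longrightarrow> pr b c u = pr b c v) \<Longrightarrow> heap_equiv I u v"
proof (induction u arbitrary: v)
  case Nil
  have "v = []"
  proof (rule ccontr)
    assume "v \<noteq> []"
    then obtain d where "d \<in> set v" by (cases v) auto
    then have "pr d d v \<noteq> []" by (simp add: filter_empty_conv) 
    moreover have "pr d d [] = pr d d v" using Nil Iirr by blast
    ultimately show False by simp
  qed
  then show ?case by simp
next
  case (Cons d u)
  have e1: "pr d d (d # u) = pr d d v" using Cons.prems Iirr by blast
  have "d \<in> set (pr d d (d # u))" by simp
  then have "d \<in> set (pr d d v)" by (simp only: e1)
  then have "d \<in> set v" by simp
  then obtain v1 v2 where v: "v = v1 @ d # v2" "d \<notin> set v1" by (meson split_list_first)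
  have ind: "\<forall>e\<in>set v1. I d e"
  proof
    fix e assume e: "e \<in> set v1"
    show "I d e"
    proof (rule ccontr)
      assume dep: "\<not> I d e"
      have "pr d e (d # u) = pr d e v" using Cons.prems dep by blast
      then have "d # pr d e u = pr d e v1 @ d # pr d e v2" using v by simp
      moreover have "pr d e v1 \<noteq> []" using e by (simp add: filter_empty_conv) blast
      moreover have "set (pr d e v1) \<subseteq> {e}" using v(2) by auto
      ultimately have "hd (pr d e v1) = d" by (metis hd_append2 list.sel(1))
      moreover have "hd (pr d e v1) \<in> set (pr d e v1)" using \<open>pr d e v1 \<noteq> []\<close> by (rule hd_in_set)
      ultimately show False using v(2) by auto
    qed
  qed
  have "\<forall>b c. \<not> I b c \<longrightarrow> pr b c u = pr b c (v1 @ v2)"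
  proof (intro allI impI)
    fix b c assume bc: "\<not> I b c"
    have eq: "pr b c (d # u) = pr b c v1 @ pr b c (d # v2)" using Cons.prems bc v by simp
    show "pr b c u = pr b c (v1 @ v2)"
    proof (cases "d = b \<or> d = c")
      case True
      have "pr b c v1 = []"
      proof -
        have "\<not> (e = b \<or> e = c)" if "e \<in> set v1" for e
        proof
          assume "e = b \<or> e = c"
          have "e \<noteq> d" using that v(2) by auto
          then have "\<not> I d e" using True \<open>e = b \<or> e = c\<close> bc Isym by auto
          then show False using ind that by auto
        qed
        then show ?thesis by (simp add: filter_empty_conv)
      qed
      then show ?thesis using eq True by auto
    next
      case False then show ?thesis using eq by auto
    qed
  qed
  then have "heap_equiv I u (v1 @ v2)" using Cons.IH by blast
  then have h1: "heap_equiv I (d # u) (d # v1 @ v2)" using heq_ctx[of u "v1 @ v2" "[d]" "[]"] by simp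
  have "heap_equiv I v (d # v1 @ v2)" using bubble[OF ind, of v2] v(1) by simp
  then show ?case using heq_trans[OF h1 heq_sym] by blast
qed

lemma dep_pair: "\<not> I b c \<Longrightarrow> x = b \<or> x = c \<Longrightarrow> y = b \<or> y = c \<Longrightarrow> \<not> I x y"
  using Iirr Isym by blast

lemma annot_proj1:
  "pr b c u = map fst (filter (\<lambda>p. fst p = b \<or> fst p = c) (annot u))"
proof -
  have "pr b c u = pr b c (map fst (annot u))" by (simp only: annot_fst)
  also have "... = map fst (filter (\<lambda>p. fst p = b \<or> fst p = c) (annot u))"
    by (simp add: filter_map comp_def)
  finally show ?thesis .
qed

lemma annot_proj2:
  assumes "\<not> I b c"
  shows "sorted_wrt (\<lambda>p q. snd p < snd q) (filter (\<lambda>p. fst p = b \<or> fst p = c) (annot u))"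
proof -
  have "sorted_wrt (\<lambda>p q. \<not> I (fst p) (fst q) \<longrightarrow> snd p < snd q) (filter (\<lambda>p. fst p = b \<or> fst p = c) (annot u))"
    using annot_srt[of u] unfolding srt_def by (rule sorted_wrt_filter)
  then show ?thesis
  proof (rule sorted_wrt_mono_rel[rotated])
    fix x y assume "x \<in> set (filter (\<lambda>p. fst p = b \<or> fst p = c) (annot u))"
      "y \<in> set (filter (\<lambda>p. fst p = b \<or> fst p = c) (annot u))"
      "\<not> I (fst x) (fst y) \<longrightarrow> snd x < snd y"
    then show "snd x < snd y" using dep_pair[OF assms, of "fst x" "fst y"] by simp
  qed
qed

lemma ann_equiv: "mset (annot u) = mset (annot v) \<Longrightarrow> heap_equiv I u v"
proof (rule proj_equiv, intro allI impI)
  fix b c assume m: "mset (annot u) = mset (annot v)" and bc: "\<not> I b c"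
  let ?Q = "\<lambda>p. fst p = b \<or> fst p = c"
  have m2: "mset (filter ?Q (annot u)) = mset (filter ?Q (annot v))"
    using m by (simp only: mset_filter)
  have e: "filter ?Q (annot u) = filter ?Q (annot v)"
    by (rule sorted_wrt_mset_unique[where R="\<lambda>p q. snd p < snd q", OF _ annot_proj2[OF bc] annot_proj2[OF bc] m2])
       simp
  show "pr b c u = pr b c v" unfolding annot_proj1[of b c u] annot_proj1[of b c v] e ..
qed

end

lemma sorted_pair:
  assumes "sorted_wrt R xs" "x \<in> set xs" "y \<in> set xs" "x \<noteq> y"
  shows "R x y \<or> R y x"
proof -
  obtain i j where ij: "i < length xs" "j < length xs" "xs ! i = x" "xs ! j = y"
    using assms(2,3) by (metis in_set_conv_nth)
  then have "i \<noteq> j" using assms(4) by auto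
  then show ?thesis using assms(1) ij by (metis linorder_neqE_nat sorted_wrt_iff_nth_less)
qed

lemma len_le1: "sorted_wrt R xs \<Longrightarrow> (\<forall>x\<in>set xs. \<forall>y\<in>set xs. \<not> R x y) \<Longrightarrow> length xs \<le> 1"
  by (cases xs rule: remdups_adj.cases) auto

lemma list_le1_eq: "length xs \<le> 1 \<Longrightarrow> length ys \<le> 1 \<Longrightarrow> set xs = set ys \<Longrightarrow> xs = ys"
  by (cases xs rule: remdups_adj.cases; cases ys rule: remdups_adj.cases) auto

lemma sorted_split:
  "sorted_wrt R L \<Longrightarrow> (\<forall>p q. \<not> P p \<longrightarrow> P q \<longrightarrow> \<not> R p q) \<Longrightarrow> L = filter P L @ filter (\<lambda>x. \<not> P x) L"
proof (induction L)
  case Nil then show ?case by simp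
next
  case (Cons x xs)
  show ?case
  proof (cases "P x")
    case True then show ?thesis using Cons by auto
  next
    case False
    then have "filter P xs = []" using Cons.prems by (auto simp: filter_empty_conv)
    then have "filter (\<lambda>x. \<not> P x) xs = xs" by (simp add: filter_id_conv filter_empty_conv)
    then show ?thesis using False \<open>filter P xs = []\<close> by simp
  qed
qed

lemma split_levels:
  "sorted_wrt (\<lambda>p q. snd p < snd q) L \<Longrightarrow> (\<forall>p\<in>set L. 1 \<le> snd p \<and> snd p \<le> k) \<Longrightarrow>
   map fst L = concat (map (\<lambda>i. map fst (filter (\<lambda>p. snd p = Suc i) L)) [0..<k])"
proof (induction k arbitrary: L)
  case 0
  then have "L = []" by (cases L) auto
  then show ?case by simp
next
  case (Suc k)
  let ?L1 = "filter (\<lambda>p. snd p \<le> k) L"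
  have split: "L = ?L1 @ filter (\<lambda>p. \<not> snd p \<le> k) L"
    by (rule sorted_split[OF Suc.prems(1)]) auto
  have f2: "filter (\<lambda>p. \<not> snd p \<le> k) L = filter (\<lambda>p. snd p = Suc k) L"
    using Suc.prems(2) by (intro filter_cong) auto
  have IH: "map fst ?L1 = concat (map (\<lambda>i. map fst (filter (\<lambda>p. snd p = Suc i) ?L1)) [0..<k])"
    using Suc.prems by (intro Suc.IH) (auto simp: sorted_wrt_filter)
  have "map (\<lambda>i. map fst (filter (\<lambda>p. snd p = Suc i) ?L1)) [0..<k] = map (\<lambda>i. map fst (filter (\<lambda>p. snd p = Suc i) L)) [0..<k]"
    by (rule map_cong) (auto simp: filter_filter intro!: arg_cong[where f="map fst"] filter_cong)
  then have "map fst L = concat (map (\<lambda>i. map fst (filter (\<lambda>p. snd p = Suc i) L)) [0..<k]) @ map fst (filter (\<lambda>p. snd p = Suc k) L)"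
    using IH split f2 by (metis map_append)
  then show ?case by simp
qed

lemma cword_prop: "finite S \<Longrightarrow> distinct (cword S) \<and> set (cword S) = S"
  unfolding cword_def by (rule someI_ex) (metis finite_distinct_list)

lemma fst_img: "set (map fst (filter (\<lambda>p. P (fst p) \<and> snd p = h) A)) = {x. (x, h) \<in> set A \<and> P x}"
proof (intro equalityI subsetI)
  fix x assume "x \<in> set (map fst (filter (\<lambda>p. P (fst p) \<and> snd p = h) A))"
  then obtain p where "p \<in> set A" "snd p = h" "P (fst p)" "x = fst p" by auto
  then show "x \<in> {x. (x, h) \<in> set A \<and> P x}" by (cases p) auto
next
  fix x assume "x \<in> {x. (x, h) \<in> set A \<and> P x}"
  then have "(x, h) \<in> set A" "P x" by auto
  then show "x \<in> set (map fst (filter (\<lambda>p. P (fst p) \<and> snd p = h) A))"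
    by (simp add: rev_image_eqI[of "(x, h)"])
qed

context hp begin

lemma same_height_indep:
  assumes "p \<in> set (annot w)" "q \<in> set (annot w)" "p \<noteq> q" "snd p = snd q"
  shows "I (fst p) (fst q)"
proof (rule ccontr)
  assume dep: "\<not> I (fst p) (fst q)"
  then have "\<not> I (fst q) (fst p)" using Isym by blast
  then show False using sorted_pair[OF annot_srt[of w, unfolded srt_def] assms(1-3)] dep assms(4) by auto
qed

lemma level_nonempty:
  assumes "1 \<le> h" "h \<le> maxH (annot w)"
  shows "\<exists>p\<in>set (annot w). snd p = h"
proof -
  let ?A = "annot w" let ?m = "maxH ?A"
  have "?m \<in> insert 0 (snd ` set ?A)" unfolding maxH_def by (rule Max_in) auto
  then have "?m \<in> snd ` set ?A" using assms by auto
  then have top: "\<exists>p\<in>set ?A. snd p = ?m" by (metis imageE)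
  have "\<And>n. n < ?m \<Longrightarrow> \<exists>p\<in>set ?A. snd p = ?m - n"
  proof -
    fix n show "n < ?m \<Longrightarrow> \<exists>p\<in>set ?A. snd p = ?m - n"
    proof (induction n)
      case 0 then show ?case using top by simp
    next
      case (Suc n)
      then obtain p where p: "p \<in> set ?A" "snd p = ?m - n" by auto
      then have "1 < snd p" using Suc.prems by auto
      then obtain q where "q \<in> set ?A" "snd q = snd p - 1" using annot_pred[OF p(1)] by auto
      then show ?case using p by auto
    qed
  qed
  from this[of "?m - h"] show ?thesis using assms by auto
qed

lemma cf_exists:
  assumes u: "u \<in> heaps I"
  shows "\<exists>c k. (\<forall>i<k. c i \<in> cliques I) \<and> (\<forall>i. Suc i < k \<longrightarrow> arrow I (c i) (c (Suc i)))
                \<and> (\<forall>i\<ge>k. c i = {}) \<and> prod_cliques I c k = u"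
proof -
  define w where "w = rep u"
  define A where "A = annot w"
  define k where "k = maxH A"
  define cl where "cl i = (if i < k then {b. (b, Suc i) \<in> set A} else {})" for i
  have fin: "finite (cl i)" for i
  proof -
    have "cl i \<subseteq> fst ` set A"
    proof
      fix x assume "x \<in> cl i"
      then have "(x, Suc i) \<in> set A" by (auto simp: cl_def split: if_splits)
      then show "x \<in> fst ` set A" by (rule rev_image_eqI) simp
    qed
    then show ?thesis by (meson finite_set finite_imageI finite_subset)
  qed
  have cl1: "\<forall>i<k. cl i \<in> cliques I"
  proof (intro allI impI)
    fix i assume "i < k"
    then obtain p where "p \<in> set A" "snd p = Suc i" using level_nonempty[of "Suc i" w] by (auto simp: A_def k_def)
    then have "(fst p, Suc i) \<in> set A" by (metis prod.collapse)
    then have ne: "cl i \<noteq> {}" using \<open>i < k\<close> unfolding cl_def by auto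
    have "\<forall>a\<in>cl i. \<forall>b\<in>cl i. a \<noteq> b \<longrightarrow> I a b"
    proof (intro ballI impI)
      fix a b assume "a \<in> cl i" "b \<in> cl i" "a \<noteq> b"
      then have "(a, Suc i) \<in> set A" "(b, Suc i) \<in> set A" using \<open>i < k\<close> by (auto simp: cl_def)
      then show "I a b" using same_height_indep[of "(a, Suc i)" w "(b, Suc i)"] \<open>a \<noteq> b\<close> by (simp add: A_def)
    qed
    then show "cl i \<in> cliques I" using ne by (simp add: cliques_def)
  qed
  have cl2: "\<forall>i. Suc i < k \<longrightarrow> arrow I (cl i) (cl (Suc i))"
  proof (intro allI impI)
    fix i assume "Suc i < k"
    show "arrow I (cl i) (cl (Suc i))" unfolding arrow_def
    proof
      fix b assume "b \<in> cl (Suc i)"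
      then have "(b, Suc (Suc i)) \<in> set A" using \<open>Suc i < k\<close> by (simp add: cl_def)
      then obtain q where "q \<in> set A" "\<not> I (fst q) b" "snd q = Suc i"
        using annot_pred[of "(b, Suc (Suc i))" w] by (auto simp: A_def)
      then have "(fst q, Suc i) \<in> set A" by (metis prod.collapse)
      then have "fst q \<in> cl i" using \<open>Suc i < k\<close> by (simp add: cl_def)
      then show "\<exists>a\<in>cl i. \<not> I a b" using \<open>\<not> I (fst q) b\<close> by blast
    qed
  qed
  have cl3: "\<forall>i\<ge>k. cl i = {}" by (simp add: cl_def)
  define V where "V = concat (map (\<lambda>i. cword (cl i)) [0..<k])"
  have "heap_equiv I w V"
  proof (rule proj_equiv, intro allI impI)
    fix b d assume bd: "\<not> I b d"
    let ?Q = "\<lambda>p. fst p = b \<or> fst p = d"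
    define L where "L = filter ?Q A"
    have Ls: "sorted_wrt (\<lambda>p q. snd p < snd q) L" using annot_proj2[OF bd] by (simp add: L_def A_def)
    have Lr: "\<forall>p\<in>set L. 1 \<le> snd p \<and> snd p \<le> k"
    proof
      fix p assume "p \<in> set L" then have "p \<in> set A" by (simp add: L_def)
      then show "1 \<le> snd p \<and> snd p \<le> k" using annot_pos[of p w] maxH_ge[of p A] by (simp add: A_def k_def)
    qed
    have "pr b d w = map fst L" using annot_proj1 by (simp add: L_def A_def)
    also have "... = concat (map (\<lambda>i. map fst (filter (\<lambda>p. snd p = Suc i) L)) [0..<k])"
      by (rule split_levels[OF Ls Lr])
    also have "... = concat (map (\<lambda>i. pr b d (cword (cl i))) [0..<k])"
    proof (rule arg_cong[where f=concat], rule map_cong, simp)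
      fix i assume "i \<in> set [0..<k]"
      then have ik: "i < k" by simp
      let ?R = "filter (\<lambda>p. snd p = Suc i) L"
      have R1: "length (map fst ?R) \<le> 1"
        using len_le1[of "\<lambda>p q. snd p < snd q" ?R] Ls by (auto simp: sorted_wrt_filter)
      have "?R = filter (\<lambda>p. (\<lambda>x. x = b \<or> x = d) (fst p) \<and> snd p = Suc i) A"
        by (simp add: L_def filter_filter)
      then have setR: "set (map fst ?R) = {x. (x, Suc i) \<in> set A \<and> (x = b \<or> x = d)}"
        using fst_img[of "\<lambda>x. x = b \<or> x = d" "Suc i" A] by simp
      have cw: "distinct (cword (cl i)) \<and> set (cword (cl i)) = cl i" by (rule cword_prop[OF fin])
      have setC: "set (pr b d (cword (cl i))) = {x. (x, Suc i) \<in> set A \<and> (x = b \<or> x = d)}"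
        using cw ik by (auto simp: cl_def)
      have "distinct (pr b d (cword (cl i)))" using cw by simp
      then have "length (pr b d (cword (cl i))) = card (set (pr b d (cword (cl i))))"
        by (rule distinct_card[symmetric])
      also have "... = card (set (map fst ?R))" using setR setC by simp
      also have "... \<le> length (map fst ?R)" by (rule card_length)
      finally have "length (pr b d (cword (cl i))) \<le> 1" using R1 by simp
      then show "map fst ?R = pr b d (cword (cl i))" using R1 setR setC by (intro list_le1_eq) auto
    qed
    also have "... = pr b d V" by (simp add: V_def filter_concat map_map comp_def)
    finally show "pr b d w = pr b d V" .
  qed
  then have "heap_of I V = heap_of I w" by (rule heap_of_eq[THEN iffD2, OF heq_sym])
  then have "prod_cliques I cl k = u"
    unfolding prod_cliques_def V_def[symmetric] using heap_of_rep[OF u] w_def by simp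
  then show ?thesis using cl1 cl2 cl3 by blast
qed

lemma cf_prod: "u \<in> heaps I \<Longrightarrow> \<exists>k. prod_cliques I (cf I u) k = u"
proof -
  assume u: "u \<in> heaps I"
  let ?S = "\<lambda>c. \<exists>k. (\<forall>i<k. c i \<in> cliques I) \<and> (\<forall>i. Suc i < k \<longrightarrow> arrow I (c i) (c (Suc i)))
                \<and> (\<forall>i\<ge>k. c i = {}) \<and> prod_cliques I c k = u"
  have ex: "\<exists>c. ?S c" using cf_exists[OF u] by blast
  have "?S (SOME c. ?S c)" by (rule someI_ex[OF ex])
  then have "?S (cf I u)" unfolding cf_def .
  then show ?thesis by blast
qed

definition pc :: "(nat \<Rightarrow> 'a set) \<Rightarrow> nat \<Rightarrow> 'a list" where
  "pc \<xi> n = concat (map (\<lambda>i. cword (\<xi> i)) [0..<n])"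

lemma pc_mono: "N \<le> M \<Longrightarrow> \<exists>r. pc \<xi> M = pc \<xi> N @ r"
proof -
  assume "N \<le> M" then obtain d where d: "M = N + d" using le_Suc_ex by blast
  have "[0..<N + d] = [0..<N] @ [N..<N + d]" by (rule upt_add_eq_append) simp
  then have "pc \<xi> M = pc \<xi> N @ concat (map (\<lambda>i. cword (\<xi> i)) [N..<M])"
    unfolding pc_def d by simp
  then show ?thesis by blast
qed

lemma up_word:
  assumes "u \<in> heaps I" "\<xi> \<in> up I u"
  shows "\<exists>N. \<forall>M\<ge>N. \<exists>t. heap_equiv I (pc \<xi> M) (rep u @ t)"
proof -
  obtain k where k: "prod_cliques I (cf I u) k = u" using cf_prod[OF assms(1)] by blast
  have "\<xi> \<in> boundary I \<and> (\<forall>n. heap_le I (prod_cliques I (cf I u) n) (prod_cliques I \<xi> n))"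
    using assms(2) unfolding up_def by (rule CollectD)
  then have "heap_le I (prod_cliques I (cf I u) k) (prod_cliques I \<xi> k)" by blast
  then have "heap_le I u (prod_cliques I \<xi> k)" by (simp only: k)
  then obtain z where "prod_cliques I \<xi> k = hmult I u z" unfolding heap_le_def by blast
  then have eq: "heap_equiv I (pc \<xi> k) (rep u @ rep z)"
    unfolding prod_cliques_def hmult_def pc_def[symmetric] heap_of_eq .
  show ?thesis
  proof (rule exI[of _ k], intro allI impI)
    fix M assume "k \<le> M"
    then obtain r where r: "pc \<xi> M = pc \<xi> k @ r" using pc_mono by blast
    have "heap_equiv I (pc \<xi> k @ r) ((rep u @ rep z) @ r)" by (rule heq_app[OF eq heq_refl])
    then have "heap_equiv I (pc \<xi> M) (rep u @ (rep z @ r))" unfolding r by simp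
    then show "\<exists>t. heap_equiv I (pc \<xi> M) (rep u @ t)" by blast
  qed
qed

end

context hp begin

lemma extN_append: "extN A (u @ v) = extN A u @ extN (ext A u) v"
proof -
  have e: "ext A (u @ v) = A @ (extN A u @ extN (ext A u) v)"
    by (metis append.assoc ext_append ext_split)
  have "extN A (u @ v) = drop (length A) (ext A (u @ v))" by (simp only: extN_def)
  also have "... = extN A u @ extN (ext A u) v" unfolding e by simp
  finally show ?thesis .
qed

lemma path_ex:
  "(\<lambda>x y. \<not> I x y)\<^sup>*\<^sup>* b c \<Longrightarrow> \<exists>p. p \<noteq> [] \<and> hd p = b \<and> last p = c \<and> successively (\<lambda>x y. \<not> I x y) p"
proof (induction rule: converse_rtranclp_induct)
  case base
  then show ?case by (intro exI[of _ "[c]"]) simp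
next
  case (step b y)
  then obtain p where p: "p \<noteq> []" "hd p = y" "last p = c" "successively (\<lambda>x y. \<not> I x y) p" by blast
  then show ?case using step(1) by (intro exI[of _ "b # p"]) (auto simp: successively_Cons)
qed

definition hh :: "'a list \<Rightarrow> nat" where "hh x = maxH (annot x)"
definition bb :: "'a list \<Rightarrow> 'a" where "bb x = (SOME b. (b, hh x) \<in> set (annot x))"

lemma hh_Hof: "hh x \<le> Hof (annot x) (bb x)"
proof (cases "hh x = 0")
  case True then show ?thesis by simp
next
  case False
  have "hh x \<in> insert 0 (snd ` set (annot x))" unfolding hh_def maxH_def by (rule Max_in) auto
  then have "hh x \<in> snd ` set (annot x)" using False by auto
  then obtain p where "p \<in> set (annot x)" "snd p = hh x" by (metis imageE)
  then have "(fst p, hh x) \<in> set (annot x)" by (metis prod.collapse)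
  then have "(bb x, hh x) \<in> set (annot x)" unfolding bb_def by (rule someI)
  then show ?thesis using Hof_ge[of "(bb x, hh x)" "annot x" "bb x"] Iirr by simp
qed

lemma hh_ge: "p \<in> set (annot x) \<Longrightarrow> snd p \<le> hh x"
  unfolding hh_def by (rule maxH_ge)

end

locale hpf = hp I for I :: "'a::finite \<Rightarrow> 'a \<Rightarrow> bool" +
  assumes conn: "\<forall>b c. (\<lambda>x y. \<not> I x y)\<^sup>*\<^sup>* b c"
begin

lemma walk_ex: "finite S \<Longrightarrow> \<exists>w. w \<noteq> [] \<and> hd w = b \<and> successively (\<lambda>x y. \<not> I x y) w \<and> S \<subseteq> set w"
proof (induction rule: finite_induct)
  case empty then show ?case by (intro exI[of _ "[b]"]) simp
next
  case (insert c S)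
  then obtain w where w: "w \<noteq> []" "hd w = b" "successively (\<lambda>x y. \<not> I x y) w" "S \<subseteq> set w" by blast
  obtain p where p: "p \<noteq> []" "hd p = last w" "last p = c" "successively (\<lambda>x y. \<not> I x y) p"
    using path_ex conn by blast
  have pp: "p = last w # tl p" using p(1,2) by (metis list.collapse)
  have s: "successively (\<lambda>x y. \<not> I x y) (w @ tl p)"
  proof (cases "tl p = []")
    case True then show ?thesis using w by simp
  next
    case False
    have "successively (\<lambda>x y. \<not> I x y) (last w # tl p)" using p(4) pp by metis
    then show ?thesis using w False by (simp add: successively_append_iff successively_Cons)
  qed
  have "c \<in> set (w @ tl p)"
  proof (cases "tl p = []")
    case True then have "c = last w" using p pp by (metis last_ConsL)
    then show ?thesis using w(1) by simp
  next
    case False then have "c = last (tl p)" using p pp by (metis last_ConsR)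
    then show ?thesis using False by simp
  qed
  then show ?case using w s by (intro exI[of _ "w @ tl p"]) auto
qed

definition W :: "'a \<Rightarrow> 'a list" where
  "W b = (SOME w. w \<noteq> [] \<and> hd w = b \<and> successively (\<lambda>x y. \<not> I x y) w \<and> set w = UNIV)"

lemma W_prop: "W b \<noteq> [] \<and> hd (W b) = b \<and> successively (\<lambda>x y. \<not> I x y) (W b) \<and> set (W b) = UNIV"
proof -
  have "\<exists>w. w \<noteq> [] \<and> hd w = b \<and> successively (\<lambda>x y. \<not> I x y) w \<and> set w = UNIV"
    using walk_ex[of UNIV b] by auto
  then show ?thesis unfolding W_def by (rule someI_ex)
qed

definition LL :: nat where "LL = Max (range (\<lambda>b. length (W b)))"

lemma W_len: "length (W b) \<le> LL"
  unfolding LL_def by (rule Max_ge) auto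

lemma LL_pos: "0 < LL"
  using W_len[of undefined] W_prop[of undefined] by (cases "W undefined") auto

lemma word_struct:
  shows "annot (x @ W (bb x) @ s) = annot x @ extN (annot x) (W (bb x) @ s)"
    and "\<forall>p\<in>set (extN (annot x) (W (bb x) @ s)). hh x < snd p"
    and "\<exists>ha. (a, ha) \<in> set (extN (annot x) (W (bb x) @ s)) \<and> ha \<le> hh x + LL"
proof -
  let ?A = "annot x" let ?Wb = "W (bb x)"
  show "annot (x @ ?Wb @ s) = ?A @ extN ?A (?Wb @ s)"
    unfolding annot_def by (simp add: ext_append[symmetric] ext_split[symmetric])
  have split: "extN ?A (?Wb @ s) = extN ?A ?Wb @ extN (ext ?A ?Wb) s" by (rule extN_append)
  have Wc: "?Wb = bb x # tl ?Wb" using W_prop[of "bb x"] by (metis list.collapse)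
  have B1: "\<forall>p\<in>set (extN ?A ?Wb). hh x < snd p"
  proof
    fix p assume p: "p \<in> set (extN ?A ?Wb)"
    have "successively (\<lambda>x y. \<not> I x y) (bb x # tl ?Wb)" using W_prop[of "bb x"] Wc by metis
    then show "hh x < snd p" using chain_lb[of "bb x" "tl ?Wb" "hh x" ?A p] hh_Hof p Wc by metis
  qed
  have H: "\<forall>c. Suc (hh x) \<le> Hof (ext ?A ?Wb) c"
  proof
    fix c
    have "c \<in> set (map fst (extN ?A ?Wb))" using W_prop[of "bb x"] by (simp only: extN_fst) simp
    then obtain p where p: "p \<in> set (extN ?A ?Wb)" "fst p = c" by auto
    then have "p \<in> set (ext ?A ?Wb)" by (subst ext_split) simp
    then have "snd p \<le> Hof (ext ?A ?Wb) c" using Hof_ge[of p _ c] p(2) Iirr by simp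
    then show "Suc (hh x) \<le> Hof (ext ?A ?Wb) c" using B1 p(1) by force
  qed
  have B2: "\<forall>p\<in>set (extN (ext ?A ?Wb) s). hh x < snd p"
    using ext_lb[OF H] by force
  show "\<forall>p\<in>set (extN ?A (?Wb @ s)). hh x < snd p" using B1 B2 split by auto
  have "a \<in> set (map fst (extN ?A ?Wb))" using W_prop[of "bb x"] by (simp only: extN_fst) simp
  then obtain p where p: "p \<in> set (extN ?A ?Wb)" "fst p = a" by auto
  then have "p \<in> set (ext ?A ?Wb)" by (subst ext_split) simp
  then have "snd p \<le> maxH ?A + length ?Wb" by (rule ext_ub)
  then have "snd p \<le> hh x + LL" using W_len[of "bb x"] by (simp add: hh_def)
  moreover have "(a, snd p) \<in> set (extN ?A (?Wb @ s))" using p split by (metis UnI1 prod.collapse set_append)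
  ultimately show "\<exists>ha. (a, ha) \<in> set (extN ?A (?Wb @ s)) \<and> ha \<le> hh x + LL" by blast
qed

lemma low_part: "mset (filter (\<lambda>p. snd p \<le> hh x) (annot (x @ W (bb x) @ s))) = mset (annot x)"
proof -
  have "filter (\<lambda>p. snd p \<le> hh x) (annot x) = annot x" using hh_ge by (simp add: filter_id_conv)
  moreover have "filter (\<lambda>p. snd p \<le> hh x) (extN (annot x) (W (bb x) @ s)) = []"
    using word_struct(2)[of x s] by (auto simp: filter_empty_conv)
  ultimately show ?thesis unfolding word_struct(1) by simp
qed

lemma word_lt:
  assumes "a \<notin> set x2" "hh x1 mod LL = hh x2 mod LL" "hh x1 < hh x2"
    "mset (annot (x1 @ W (bb x1) @ s1)) = mset (annot (x2 @ W (bb x2) @ s2))"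
  shows False
proof -
  have "LL dvd (hh x2 - hh x1)" using assms(2,3) mod_eq_dvd_iff_nat by (metis less_imp_le)
  then have "LL \<le> hh x2 - hh x1" using assms(3) by (intro dvd_imp_le) auto
  then have le: "hh x1 + LL \<le> hh x2" using assms(3) by arith
  obtain ha where ha: "(a, ha) \<in> set (extN (annot x1) (W (bb x1) @ s1))" "ha \<le> hh x1 + LL"
    using word_struct(3) by blast
  then have "(a, ha) \<in> set (filter (\<lambda>p. snd p \<le> hh x2) (annot (x1 @ W (bb x1) @ s1)))"
    using le by (simp add: word_struct(1))
  also have "set (filter (\<lambda>p. snd p \<le> hh x2) (annot (x1 @ W (bb x1) @ s1)))
      = set (filter (\<lambda>p. snd p \<le> hh x2) (annot (x2 @ W (bb x2) @ s2)))"
    using assms(4) by (metis mset_filter set_mset_mset)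
  also have "... = set (annot x2)" using low_part by (metis set_mset_mset)
  finally have "a \<in> set (map fst (annot x2))" by (metis fst_conv image_eqI set_map)
  then show False using assms(1) annot_fst by simp
qed

lemma word_disj:
  assumes "a \<notin> set x1" "a \<notin> set x2" "hh x1 mod LL = hh x2 mod LL"
    "heap_equiv I (x1 @ W (bb x1) @ s1) (x2 @ W (bb x2) @ s2)"
  shows "heap_equiv I x1 x2"
proof -
  have m: "mset (annot (x1 @ W (bb x1) @ s1)) = mset (annot (x2 @ W (bb x2) @ s2))"
    using annot_inv[OF assms(4)] .
  have "\<not> hh x1 < hh x2" using word_lt[OF assms(2,3) _ m] by blast
  moreover have "\<not> hh x2 < hh x1" using word_lt[OF assms(1) assms(3)[symmetric] _ m[symmetric]] by blast
  ultimately have eq: "hh x1 = hh x2" by simp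
  have "mset (annot x1) = mset (filter (\<lambda>p. snd p \<le> hh x1) (annot (x1 @ W (bb x1) @ s1)))"
    using low_part by simp
  also have "... = mset (filter (\<lambda>p. snd p \<le> hh x2) (annot (x2 @ W (bb x2) @ s2)))"
    using m eq by (simp add: mset_filter)
  also have "... = mset (annot x2)" using low_part by simp
  finally show ?thesis by (rule ann_equiv)
qed

definition wx :: "'a list set \<Rightarrow> 'a list set" where "wx x = heap_of I (W (bb (rep x)))"

lemma rep_hmult: "heap_equiv I (rep (hmult I x (wx x))) (rep x @ W (bb (rep x)))"
proof -
  have "heap_equiv I (rep (hmult I x (wx x))) (rep x @ rep (wx x))"
    unfolding hmult_def using rep_heap_of heq_sym by blast
  moreover have "heap_equiv I (rep x @ rep (wx x)) (rep x @ W (bb (rep x)))"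
    unfolding wx_def by (rule heq_app[OF heq_refl heq_sym[OF rep_heap_of]])
  ultimately show ?thesis by (rule heq_trans)
qed

lemma heap_disj:
  assumes x: "x1 \<in> heaps I" "x2 \<in> heaps I" and a: "hcount a x1 = 0" "hcount a x2 = 0"
    and m: "hh (rep x1) mod LL = hh (rep x2) mod LL" and ne: "x1 \<noteq> x2"
  shows "up I (hmult I x1 (wx x1)) \<inter> up I (hmult I x2 (wx x2)) = {}"
proof (rule ccontr)
  assume "up I (hmult I x1 (wx x1)) \<inter> up I (hmult I x2 (wx x2)) \<noteq> {}"
  then obtain \<xi> where \<xi>: "\<xi> \<in> up I (hmult I x1 (wx x1))" "\<xi> \<in> up I (hmult I x2 (wx x2))" by blast
  obtain N1 where N1: "\<forall>M\<ge>N1. \<exists>t. heap_equiv I (pc \<xi> M) (rep (hmult I x1 (wx x1)) @ t)"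
    using up_word[OF hmult_in \<xi>(1)] by blast
  obtain N2 where N2: "\<forall>M\<ge>N2. \<exists>t. heap_equiv I (pc \<xi> M) (rep (hmult I x2 (wx x2)) @ t)"
    using up_word[OF hmult_in \<xi>(2)] by blast
  obtain t1 where t1: "heap_equiv I (pc \<xi> (max N1 N2)) (rep (hmult I x1 (wx x1)) @ t1)" using N1 max.cobounded1 by blast
  obtain t2 where t2: "heap_equiv I (pc \<xi> (max N1 N2)) (rep (hmult I x2 (wx x2)) @ t2)" using N2 max.cobounded2 by blast
  have e1: "heap_equiv I (pc \<xi> (max N1 N2)) (rep x1 @ W (bb (rep x1)) @ t1)"
    using heq_trans[OF t1 heq_app[OF rep_hmult heq_refl]] by simp
  have e2: "heap_equiv I (pc \<xi> (max N1 N2)) (rep x2 @ W (bb (rep x2)) @ t2)"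
    using heq_trans[OF t2 heq_app[OF rep_hmult heq_refl]] by simp
  have "heap_equiv I (rep x1 @ W (bb (rep x1)) @ t1) (rep x2 @ W (bb (rep x2)) @ t2)"
    using heq_trans[OF heq_sym[OF e1] e2] .
  moreover have "a \<notin> set (rep x1)" "a \<notin> set (rep x2)" using a by (auto simp: hcount_def count_list_0_iff)
  ultimately have "heap_equiv I (rep x1) (rep x2)" using word_disj m by blast
  then have "x1 = x2" using heap_of_eq heap_of_rep x by metis
  then show False using ne by simp
qed

end

locale hpb = hpf I for I :: "'a::finite \<Rightarrow> 'a \<Rightarrow> bool" +
  fixes P :: "(nat \<Rightarrow> 'a set) measure" and a :: 'a
  assumes bern: "bernoulli I P"
begin

abbreviation fm where "fm x \<equiv> measure P (up I x)"
abbreviation Aset where "Aset \<equiv> {x \<in> heaps I. hcount a x = 0}"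

lemma ps: "prob_space P" using bern by (simp add: bernoulli_def)
lemma fm_mult: "x \<in> heaps I \<Longrightarrow> y \<in> heaps I \<Longrightarrow> fm (hmult I x y) = fm x * fm y"
  using bern by (simp add: bernoulli_def)
lemma fm_pos: "x \<in> heaps I \<Longrightarrow> 0 < fm x" using bern by (simp add: bernoulli_def)
lemma fm_nonneg: "0 \<le> fm x" by simp
lemma up_meas: "x \<in> heaps I \<Longrightarrow> up I x \<in> sets P"
  using bern unfolding bernoulli_def by (auto intro: sigma_sets.Basic)

definition c0 :: real where "c0 = Min (range (\<lambda>b. fm (heap_of I (W b))))"

lemma c0_pos: "0 < c0"
  unfolding c0_def by (subst Min_gr_iff) (auto intro: fm_pos)

lemma c0_le: "c0 \<le> fm (wx x)"
  unfolding c0_def wx_def by (rule Min_le) auto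

definition K0 :: real where "K0 = real LL / c0"

lemma K0_nonneg: "0 \<le> K0" using c0_pos by (simp add: K0_def)

lemma S0: assumes "finite F" "F \<subseteq> Aset" shows "sum fm F \<le> K0"
proof -
  interpret prob_space P by (rule ps)
  have rb: "c0 * sum fm {x\<in>F. hh (rep x) mod LL = r} \<le> 1" for r
  proof -
    let ?G = "{x\<in>F. hh (rep x) mod LL = r}"
    have fG: "finite ?G" using assms(1) by simp
    have disj: "disjoint_family_on (\<lambda>x. up I (hmult I x (wx x))) ?G"
      unfolding disjoint_family_on_def
    proof (intro ballI impI)
      fix x y assume "x \<in> ?G" "y \<in> ?G" "x \<noteq> y"
      then show "up I (hmult I x (wx x)) \<inter> up I (hmult I y (wx y)) = {}"
        using assms(2) by (intro heap_disj[where a=a]) auto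
    qed
    have meas: "(\<lambda>x. up I (hmult I x (wx x))) ` ?G \<subseteq> sets P" using up_meas hmult_in by auto
    have "(\<Sum>x\<in>?G. fm (hmult I x (wx x))) = prob (\<Union>x\<in>?G. up I (hmult I x (wx x)))"
      by (rule finite_measure_finite_Union[symmetric, OF fG meas disj])
    also have "... \<le> 1" by simp
    finally have le1: "(\<Sum>x\<in>?G. fm (hmult I x (wx x))) \<le> 1" .
    have "c0 * sum fm ?G = (\<Sum>x\<in>?G. fm x * c0)" by (simp add: sum_distrib_left mult.commute)
    also have "... \<le> (\<Sum>x\<in>?G. fm (hmult I x (wx x)))"
    proof (rule sum_mono)
      fix x assume "x \<in> ?G"
      then have x: "x \<in> heaps I" using assms(2) by auto
      have "fm x * c0 \<le> fm x * fm (wx x)" by (rule mult_left_mono[OF c0_le fm_nonneg])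
      also have "... = fm (hmult I x (wx x))" using fm_mult[OF x] by (simp add: wx_def)
      finally show "fm x * c0 \<le> fm (hmult I x (wx x))" .
    qed
    finally show ?thesis using le1 by simp
  qed
  have "sum fm F = (\<Sum>r\<in>{..<LL}. sum fm {x\<in>F. hh (rep x) mod LL = r})"
    by (rule sum.group[symmetric]) (use assms(1) LL_pos in auto)
  also have "... \<le> (\<Sum>r\<in>{..<LL}. 1 / c0)"
    using rb c0_pos by (intro sum_mono) (simp add: field_simps mult.commute)
  also have "... = K0" by (simp add: K0_def)
  finally show ?thesis .
qed

lemma hlen_hmult: "y \<in> heaps I \<Longrightarrow> z \<in> heaps I \<Longrightarrow> hlen (hmult I y z) = hlen y + hlen z"
  unfolding hmult_def hlen_heap_of by (simp add: hlen_def)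

lemma take_hlen: "i < hlen x \<Longrightarrow> hlen (heap_of I (take i (rep x))) = i"
  unfolding hlen_heap_of by (simp add: hlen_def)

lemma wsum:
  assumes "finite F" "F \<subseteq> Aset" "\<And>x. 0 \<le> \<phi> x"
  shows "\<exists>F1 F2. finite F1 \<and> F1 \<subseteq> Aset \<and> finite F2 \<and> F2 \<subseteq> Aset \<and>
     (\<Sum>x\<in>F. real (hlen x) * \<phi> x * fm x) \<le> (\<Sum>y\<in>F1. \<Sum>z\<in>F2. \<phi> (hmult I y z) * fm y * fm z)"
proof -
  define Sig where "Sig = Sigma F (\<lambda>x. {..<hlen x})"
  define g where "g q = (heap_of I (take (snd q) (rep (fst q))), heap_of I (drop (snd q) (rep (fst q))))" for q
  define H where "H q = \<phi> (hmult I (fst q) (snd q)) * fm (fst q) * fm (snd q)" for q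
  define F1 where "F1 = fst ` g ` Sig"
  define F2 where "F2 = snd ` g ` Sig"
  have fSig: "finite Sig" unfolding Sig_def using assms(1) by auto
  have hm: "hmult I (fst (g q)) (snd (g q)) = fst q" if "q \<in> Sig" for q
  proof -
    have "fst q \<in> heaps I" using that assms(2) by (auto simp: Sig_def)
    then show ?thesis unfolding g_def by (simp add: hmult_heap_of heap_of_rep)
  qed
  have inj: "inj_on g Sig"
  proof (rule inj_onI)
    fix p q assume pq: "p \<in> Sig" "q \<in> Sig" "g p = g q"
    then have "fst p = fst q" using hm by metis
    moreover have "snd p = snd q"
    proof -
      have "hlen (fst (g p)) = snd p" using pq(1) take_hlen by (auto simp: g_def Sig_def)
      moreover have "hlen (fst (g q)) = snd q" using pq(2) take_hlen by (auto simp: g_def Sig_def)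
      ultimately show ?thesis using pq(3) by simp
    qed
    ultimately show "p = q" by (simp add: prod_eq_iff)
  qed
  have inA: "fst (g q) \<in> Aset \<and> snd (g q) \<in> Aset" if "q \<in> Sig" for q
  proof -
    have c: "count_list (rep (fst q)) a = 0" using that assms(2) by (auto simp: Sig_def hcount_def)
    have "count_list (take (snd q) (rep (fst q))) a + count_list (drop (snd q) (rep (fst q))) a = 0"
      using c by (metis append_take_drop_id count_list_append)
    then show ?thesis by (simp add: g_def hcount_heap_of)
  qed
  have F1A: "F1 \<subseteq> Aset" and F2A: "F2 \<subseteq> Aset" using inA by (auto simp: F1_def F2_def)
  have fF: "finite F1" "finite F2" using fSig by (auto simp: F1_def F2_def)
  have "(\<Sum>x\<in>F. real (hlen x) * \<phi> x * fm x) = (\<Sum>x\<in>F. \<Sum>i\<in>{..<hlen x}. \<phi> x * fm x)"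
    by (simp add: mult.assoc)
  also have "... = (\<Sum>q\<in>Sig. \<phi> (fst q) * fm (fst q))"
    unfolding Sig_def by (subst sum.Sigma) (use assms(1) in \<open>auto simp: case_prod_beta\<close>)
  also have "... = (\<Sum>q\<in>Sig. H (g q))"
  proof (rule sum.cong[OF refl])
    fix q assume q: "q \<in> Sig"
    have "fst (g q) \<in> heaps I" "snd (g q) \<in> heaps I" by (auto simp: g_def)
    then show "\<phi> (fst q) * fm (fst q) = H (g q)"
      unfolding H_def using hm[OF q] fm_mult by (metis mult.assoc)
  qed
  also have "... = (\<Sum>p\<in>g ` Sig. H p)" using sum.reindex[OF inj, of H] by (simp add: comp_def)
  also have "... \<le> (\<Sum>p\<in>F1 \<times> F2. H p)"
  proof (rule sum_mono2)
    show "finite (F1 \<times> F2)" using fF by simp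
    show "g ` Sig \<subseteq> F1 \<times> F2"
    proof
      fix p assume "p \<in> g ` Sig"
      then have "fst p \<in> F1" "snd p \<in> F2" unfolding F1_def F2_def by blast+
      then show "p \<in> F1 \<times> F2" by (simp add: mem_Times_iff)
    qed
    show "\<And>b. b \<in> F1 \<times> F2 - g ` Sig \<Longrightarrow> 0 \<le> H b" unfolding H_def using assms(3) by simp
  qed
  also have "... = (\<Sum>y\<in>F1. \<Sum>z\<in>F2. \<phi> (hmult I y z) * fm y * fm z)"
    by (simp add: sum.cartesian_product H_def case_prod_beta)
  finally show ?thesis using fF F1A F2A by blast
qed

lemma S1: assumes "finite F" "F \<subseteq> Aset" shows "(\<Sum>x\<in>F. real (hlen x) * fm x) \<le> K0 * K0"
proof -
  obtain F1 F2 where F: "finite F1" "F1 \<subseteq> Aset" "finite F2" "F2 \<subseteq> Aset"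
    "(\<Sum>x\<in>F. real (hlen x) * 1 * fm x) \<le> (\<Sum>y\<in>F1. \<Sum>z\<in>F2. 1 * fm y * fm z)"
    using wsum[OF assms, of "\<lambda>_. 1"] by auto
  have "(\<Sum>y\<in>F1. \<Sum>z\<in>F2. 1 * fm y * fm z) = sum fm F1 * sum fm F2"
    by (simp add: sum_product)
  also have "... \<le> K0 * K0"
    using S0[OF F(1,2)] S0[OF F(3,4)] K0_nonneg by (intro mult_mono) (auto intro: sum_nonneg)
  finally show ?thesis using F(5) by simp
qed

lemma S2: assumes "finite F" "F \<subseteq> Aset" shows "(\<Sum>x\<in>F. real (hlen x) ^ 2 * fm x) \<le> 2 * (K0 * K0 * K0)"
proof -
  obtain F1 F2 where F: "finite F1" "F1 \<subseteq> Aset" "finite F2" "F2 \<subseteq> Aset"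
    "(\<Sum>x\<in>F. real (hlen x) * real (hlen x) * fm x) \<le> (\<Sum>y\<in>F1. \<Sum>z\<in>F2. real (hlen (hmult I y z)) * fm y * fm z)"
    using wsum[OF assms, of "\<lambda>x. real (hlen x)"] by auto
  have "(\<Sum>y\<in>F1. \<Sum>z\<in>F2. real (hlen (hmult I y z)) * fm y * fm z)
      = (\<Sum>y\<in>F1. \<Sum>z\<in>F2. (real (hlen y) * fm y) * fm z + fm y * (real (hlen z) * fm z))"
  proof (rule sum.cong[OF refl], rule sum.cong[OF refl])
    fix y z assume "y \<in> F1" "z \<in> F2"
    then have "hlen (hmult I y z) = hlen y + hlen z" using F(2,4) hlen_hmult by auto
    then show "real (hlen (hmult I y z)) * fm y * fm z = (real (hlen y) * fm y) * fm z + fm y * (real (hlen z) * fm z)"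
      by (simp add: algebra_simps)
  qed
  also have "... = (\<Sum>y\<in>F1. real (hlen y) * fm y) * sum fm F2 + sum fm F1 * (\<Sum>z\<in>F2. real (hlen z) * fm z)"
    by (simp add: sum.distrib sum_product)
  also have "... \<le> (K0 * K0) * K0 + K0 * (K0 * K0)"
    using S0[OF F(1,2)] S0[OF F(3,4)] S1[OF F(1,2)] S1[OF F(3,4)] K0_nonneg
    by (intro add_mono mult_mono) (auto intro!: sum_nonneg)
  finally show ?thesis using F(5) by (simp add: power2_eq_square algebra_simps)
qed

lemma summ:
  "fm summable_on Aset \<and> (\<lambda>x. real (hlen x) * fm x) summable_on Aset
   \<and> (\<lambda>x. real (hlen x) ^ 2 * fm x) summable_on Aset"
proof (intro conjI)
  show "fm summable_on Aset"
    by (rule nonneg_bdd_above_summable_on) (auto intro!: bdd_aboveI[where M=K0] S0)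
  show "(\<lambda>x. real (hlen x) * fm x) summable_on Aset"
    by (rule nonneg_bdd_above_summable_on) (auto intro!: bdd_aboveI[where M="K0 * K0"] S1)
  show "(\<lambda>x. real (hlen x) ^ 2 * fm x) summable_on Aset"
    by (rule nonneg_bdd_above_summable_on) (auto intro!: bdd_aboveI[where M="2 * (K0 * K0 * K0)"] S2)
qed

end

theorem lemma5:
  fixes I :: "'a::finite \<Rightarrow> 'a \<Rightarrow> bool" and P :: "(nat \<Rightarrow> 'a set) measure" and a :: 'a
  assumes "CARD('a) \<ge> 2"
    and "symp I" and "irreflp I"
    and "\<forall>b c. (\<lambda>x y. \<not> I x y)\<^sup>*\<^sup>* b c"
    and "bernoulli I P"
  shows "(\<lambda>x. measure P (up I x)) summable_on {x \<in> heaps I. hcount a x = 0}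
       \<and> (\<lambda>x. real (hlen x) * measure P (up I x)) summable_on {x \<in> heaps I. hcount a x = 0}
       \<and> (\<lambda>x. real (hlen x) ^ 2 * measure P (up I x)) summable_on {x \<in> heaps I. hcount a x = 0}"
proof -
  interpret hpb I P a
    by unfold_locales (use assms in auto)
  show ?thesis by (rule summ)
qed

end
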